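(* Let $n\ge1$. For each $i\in\{1,\dots,n\}$ let $\mathbf{r}_i(1),\mathbf{r}_i(2),\dots,\mathbf{r}_i(L_i)$ be a path of pairwise distinct lattice sites with $\mathbf{r}_i(1)$ equal to the origin and $L_i\ge n$. A configuration is a choice of sticking times $\tau_i\in\{1,\dots,L_i\}$, with labels $\mathbf{s}_i=\mathbf{r}_i(\tau_i)$. Call it well-ordered if for all $i,j$ and all $t<\tau_i$, $\mathbf{s}_j=\mathbf{r}_i(t)$ implies $j<i$. Let the cluster $S$ be the set of live sites $\{\mathbf{r}_i(t): 1\le i\le n,\ t\le\tau_i\}$. Call the configuration singly-occupied if every site of $S$ equals $\mathbf{s}_j$ for exactly one $j$. Then there is exactly one configuration that is both well-ordered and singly-occupied. It is the sequential-dynamics configuration: for each $i$ in increasing order, $\tau_i$ is the least $t$ such that $\mathbf{r}_i(t)\notin\{\mathbf{s}_1,\dots,\mathbf{s}_{i-1}\}$. *)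

theory Defs
  imports Main
begin

(* Paths: r i t is the site r_i(t) of walker i at time t (1-based). Sticking times: tau i. *)

definition is_config :: "nat \<Rightarrow> (nat \<Rightarrow> nat) \<Rightarrow> (nat \<Rightarrow> nat) \<Rightarrow> bool" where
  "is_config n L tau \<longleftrightarrow> (\<forall>i\<in>{1..n}. tau i \<in> {1..L i})"

definition well_ordered :: "nat \<Rightarrow> (nat \<Rightarrow> nat \<Rightarrow> 'a) \<Rightarrow> (nat \<Rightarrow> nat) \<Rightarrow> bool" where
  "well_ordered n r tau \<longleftrightarrow>
     (\<forall>i\<in>{1..n}. \<forall>j\<in>{1..n}. \<forall>t. 1 \<le> t \<and> t < tau i \<and> r j (tau j) = r i t \<longrightarrow> j < i)"

definition cluster :: "nat \<Rightarrow> (nat \<Rightarrow> nat \<Rightarrow> 'a) \<Rightarrow> (nat \<Rightarrow> nat) \<Rightarrow> 'a set" where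
  "cluster n r tau = {r i t | i t. 1 \<le> i \<and> i \<le> n \<and> 1 \<le> t \<and> t \<le> tau i}"

definition singly_occupied :: "nat \<Rightarrow> (nat \<Rightarrow> nat \<Rightarrow> 'a) \<Rightarrow> (nat \<Rightarrow> nat) \<Rightarrow> bool" where
  "singly_occupied n r tau \<longleftrightarrow>
     (\<forall>x\<in>cluster n r tau. \<exists>!j. j \<in> {1..n} \<and> r j (tau j) = x)"

primrec seq_labels :: "(nat \<Rightarrow> nat \<Rightarrow> 'a) \<Rightarrow> nat \<Rightarrow> 'a list" where
  "seq_labels r 0 = []"
| "seq_labels r (Suc k) =
     seq_labels r k @ [r (Suc k) (LEAST t. 1 \<le> t \<and> r (Suc k) t \<notin> set (seq_labels r k))]"

definition seq_tau :: "(nat \<Rightarrow> nat \<Rightarrow> 'a) \<Rightarrow> nat \<Rightarrow> nat" where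
  "seq_tau r i = (LEAST t. 1 \<le> t \<and> r i t \<notin> set (seq_labels r (i - 1)))"

end

theory Submission
  imports Defs
begin

lemma labels_set: "set (seq_labels r k) = (\<lambda>j. r j (seq_tau r j)) ` {1..k}"
proof (induction k)
  case 0
  then show ?case by simp
next
  case (Suc k)
  have "{1..Suc k} = insert (Suc k) {1..k}" by auto
  then show ?case using Suc by (simp add: seq_tau_def)
qed

lemma seq_tau_props:
  assumes "1 \<le> i" "inj_on (r i) {1..L i}" "i \<le> L i"
  shows "1 \<le> seq_tau r i \<and> seq_tau r i \<le> i
     \<and> r i (seq_tau r i) \<notin> (\<lambda>j. r j (seq_tau r j)) ` {1..i-1}
     \<and> (\<forall>t. 1 \<le> t \<and> t < seq_tau r i \<longrightarrow> r i t \<in> (\<lambda>j. r j (seq_tau r j)) ` {1..i-1})"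
proof -
  let ?A = "(\<lambda>j. r j (seq_tau r j)) ` {1..i-1}"
  have inj: "inj_on (r i) {1..i}" using inj_on_subset[OF assms(2)] assms(3) by auto
  have c1: "card (r i ` {1..i}) = i" using card_image[OF inj] by simp
  have c2: "card ?A \<le> i - 1" using card_image_le[of "{1..i-1}"] by simp
  have "\<not> r i ` {1..i} \<subseteq> ?A"
  proof
    assume "r i ` {1..i} \<subseteq> ?A"
    then have "card (r i ` {1..i}) \<le> card ?A" by (intro card_mono) auto
    with c1 c2 assms(1) show False by simp
  qed
  then obtain t where t: "t \<in> {1..i}" "r i t \<notin> ?A" by blast
  have st: "seq_tau r i = (LEAST t. 1 \<le> t \<and> r i t \<notin> ?A)"
    by (simp only: seq_tau_def[of r i] labels_set)
  have P: "1 \<le> seq_tau r i \<and> r i (seq_tau r i) \<notin> ?A"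
    unfolding st using LeastI[of "\<lambda>t. 1 \<le> t \<and> r i t \<notin> ?A" t] t by auto
  have "seq_tau r i \<le> t" unfolding st using Least_le[of "\<lambda>t. 1 \<le> t \<and> r i t \<notin> ?A" t] t by auto
  moreover have "\<forall>s. 1 \<le> s \<and> s < seq_tau r i \<longrightarrow> r i s \<in> ?A"
    unfolding st using not_less_Least[of _ "\<lambda>t. 1 \<le> t \<and> r i t \<notin> ?A"] by blast
  ultimately show ?thesis using P t by auto
qed

theorem mainTheorem9:
  fixes n :: nat and L :: "nat \<Rightarrow> nat" and r :: "nat \<Rightarrow> nat \<Rightarrow> 'a" and origin :: 'a
  assumes "n \<ge> 1"
    and "\<forall>i\<in>{1..n}. r i 1 = origin"
    and "\<forall>i\<in>{1..n}. inj_on (r i) {1..L i}"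
    and "\<forall>i\<in>{1..n}. L i \<ge> n"
  shows "is_config n L (seq_tau r)
         \<and> well_ordered n r (seq_tau r) \<and> singly_occupied n r (seq_tau r)
         \<and> (\<forall>tau. is_config n L tau \<and> well_ordered n r tau \<and> singly_occupied n r tau
                 \<longrightarrow> (\<forall>i\<in>{1..n}. tau i = seq_tau r i))"
proof -
  define S where "S j = r j (seq_tau r j)" for j
  have P: "1 \<le> seq_tau r i \<and> seq_tau r i \<le> i
     \<and> S i \<notin> S ` {1..i-1}
     \<and> (\<forall>t. 1 \<le> t \<and> t < seq_tau r i \<longrightarrow> r i t \<in> S ` {1..i-1})" if "i \<in> {1..n}" for i
  proof -
    have "n \<le> L i" using that assms(4) by blast
    then have "i \<le> L i" using that by auto
    moreover have "1 \<le> i" "inj_on (r i) {1..L i}" using that assms(3) by auto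
    moreover have Seq: "S = (\<lambda>j. r j (seq_tau r j))" by (auto simp: S_def)
    ultimately show ?thesis unfolding Seq by (intro seq_tau_props)
  qed
  have dist: "S i \<noteq> S j" if "i \<in> {1..n}" "j \<in> {1..n}" "i \<noteq> j" for i j
  proof (cases "i < j")
    case True
    then have "i \<in> {1..j-1}" using that by auto
    then have "S i \<in> S ` {1..j-1}" by blast
    moreover have "S j \<notin> S ` {1..j-1}" using P[OF that(2)] by (rule conjE) (erule conjE, erule conjE)
    ultimately show ?thesis by auto
  next
    case False
    then have "j \<in> {1..i-1}" using that by auto
    then have "S j \<in> S ` {1..i-1}" by blast
    moreover have "S i \<notin> S ` {1..i-1}" using P[OF that(1)] by (rule conjE) (erule conjE, erule conjE)
    ultimately show ?thesis by auto
  qed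
  have conf: "is_config n L (seq_tau r)"
    unfolding is_config_def using P assms(4) by fastforce
  have wo: "well_ordered n r (seq_tau r)"
    unfolding well_ordered_def
  proof (intro ballI allI impI)
    fix i j t assume ij: "i \<in> {1..n}" "j \<in> {1..n}" and h: "1 \<le> t \<and> t < seq_tau r i \<and> r j (seq_tau r j) = r i t"
    then obtain k where k: "k \<in> {1..i-1}" "r i t = S k" using P[OF ij(1)] by blast
    then have "k \<in> {1..n}" using ij by auto
    moreover have "S j = S k" using h k unfolding S_def by simp
    ultimately have "j = k" using dist[OF ij(2)] by blast
    then show "j < i" using k by auto
  qed
  have so: "singly_occupied n r (seq_tau r)"
    unfolding singly_occupied_def cluster_def
  proof (intro ballI)
    fix x assume "x \<in> {r i t |i t. 1 \<le> i \<and> i \<le> n \<and> 1 \<le> t \<and> t \<le> seq_tau r i}"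
    then obtain i t where it: "i \<in> {1..n}" "1 \<le> t" "t \<le> seq_tau r i" "x = r i t" by auto
    have "\<exists>j. j \<in> {1..n} \<and> S j = x"
    proof (cases "t = seq_tau r i")
      case True then show ?thesis using it unfolding S_def by auto
    next
      case False
      then obtain k where "k \<in> {1..i-1}" "x = S k" using P[OF it(1)] it by force
      then show ?thesis using it by (intro exI[of _ k]) auto
    qed
    then obtain j where j: "j \<in> {1..n}" "S j = x" by blast
    show "\<exists>!j. j \<in> {1..n} \<and> r j (seq_tau r j) = x"
    proof (rule ex1I[of _ j])
      show "j \<in> {1..n} \<and> r j (seq_tau r j) = x" using j unfolding S_def by simp
      fix y assume "y \<in> {1..n} \<and> r y (seq_tau r y) = x"
      then have "y \<in> {1..n}" "S y = S j" using j unfolding S_def by auto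
      then show "y = j" using dist[OF _ j(1)] by blast
    qed
  qed
  have uniq: "\<forall>i\<in>{1..n}. tau i = seq_tau r i"
    if c: "is_config n L tau" and w: "well_ordered n r tau" and so': "singly_occupied n r tau" for tau
  proof -
    have "i \<in> {1..n} \<longrightarrow> tau i = seq_tau r i" for i
    proof (induction i rule: less_induct)
      case (less i)
      show ?case
      proof
        assume i: "i \<in> {1..n}"
        have IH: "tau j = seq_tau r j" if "j \<in> {1..i-1}" for j
          using less that i by auto
        have inc: "r i t \<in> cluster n r tau" if "1 \<le> t" "t \<le> tau i" for t
          unfolding cluster_def using i that by auto
        have le1: "tau i \<le> seq_tau r i"
        proof (rule ccontr)
          assume "\<not> tau i \<le> seq_tau r i"
          then have lt: "seq_tau r i < tau i" by simp
          have "seq_tau r i \<ge> 1" using P[OF i] by simp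
          then obtain j where j: "j \<in> {1..n}" "r j (tau j) = r i (seq_tau r i)"
            using so' inc[of "seq_tau r i"] lt unfolding singly_occupied_def by force
          then have "j < i" using w i lt \<open>seq_tau r i \<ge> 1\<close> unfolding well_ordered_def by blast
          then have "j \<in> {1..i-1}" using j by auto
          then have "S i = S j" using IH j unfolding S_def by simp
          then show False using P[OF i] \<open>j \<in> {1..i-1}\<close> by auto
        qed
        have t1: "1 \<le> tau i" using c i unfolding is_config_def by auto
        have notin: "r i (tau i) \<notin> S ` {1..i-1}"
        proof
          assume "r i (tau i) \<in> S ` {1..i-1}"
          then obtain k where k: "k \<in> {1..i-1}" "r i (tau i) = S k" by auto
          then have kk: "k \<in> {1..n}" "k \<noteq> i" using i by auto
          have "r k (tau k) = r i (tau i)" using IH[OF k(1)] k unfolding S_def by simp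
          moreover have "\<exists>!j. j \<in> {1..n} \<and> r j (tau j) = r i (tau i)"
            using so' inc[OF t1] unfolding singly_occupied_def by blast
          ultimately show False using kk i by blast
        qed
        have "seq_tau r i \<le> tau i"
        proof -
          have e: "seq_tau r i = (LEAST t. 1 \<le> t \<and> r i t \<notin> (\<lambda>j. r j (seq_tau r j)) ` {1..i-1})"
            by (simp only: seq_tau_def[of r i] labels_set)
          have Seq: "(\<lambda>j. r j (seq_tau r j)) = S" by (auto simp: S_def)
          show ?thesis unfolding e Seq using t1 notin by (intro Least_le) auto
        qed
        with le1 show "tau i = seq_tau r i" by simp
      qed
    qed
    then show ?thesis by blast
  qed
  show ?thesis using conf wo so uniq by blast
qed

end
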